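(* Let $(\mathbf x,\mathbf p,\mu)$ be a deterministic TFM satisfying weak UIC and $2$-weak-SCP, and let $\mathbf b=(b_1,\dots,b_m)$ be a bid vector. Suppose there are three distinct users $i,j,k$ such that $x_i(\mathbf b_{-k},0)=x_j(\mathbf b_{-k},0)=1$, $b_i-p(\mathbf b_{-k},0)>b_k$ and $b_j-p(\mathbf b_{-k},0)>b_k$. Then $x_i(\mathbf b)=x_j(\mathbf b)=1$ and $p(\mathbf b)\le p(\mathbf b_{-k},0)+b_k/2$.
   Context: Setting (TFM). Each user $i$ has a true value $v_i\ge0$ and submits a single bid $b_i\ge0$; $\mathbf b=(b_1,\dots,b_m)$, $(\mathbf b_{-k},0)$ the vector with user $k$'s bid replaced by $0$. A TFM has an inclusion rule (run by the miner, choosing at most $B$ bids) and confirmation, payment, miner-revenue rules (run by the blockchain on included bids); the mechanism treats users symmetrically. Composing the honest inclusion rule with the others gives deterministic $(\mathbf x,\mathbf p,\mu)$: $x_i(\mathbf b)\in\{0,1\}$ indicates confirmation, $p_i(\mathbf b)\le b_i$ the payment ($0$ if unconfirmed), $\mu(\mathbf b)$ the miner revenue. Strategic players (a user, the miner, or the miner with some users) may bid untruthfully after seeing all bids, inject fake bids (true value $0$), and (if the miner is involved) include any at most $B$ available bids. Weak ($1$-strict) utility: miner revenue (if the miner is in the player) plus $v-p$ for each confirmed transaction of the player (true value $v$, payment $p$), minus $(b-v)$ for each unconfirmed transaction of the player with bid $b>v$. Weak UIC: with an honest miner, each user's weak utility is maximized by truthful bidding without fake bids, whatever the other bids. $c$-weak-SCP: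 for every coalition of the miner with between $1$ and $c$ users, joint weak utility is maximized by truthful bidding and honest miner behavior, whatever the other bids. Universal payment: for mechanisms satisfying weak UIC and $2$-weak-SCP, all users confirmed under $\mathbf b$ pay the same amount; $p(\mathbf b)$ denotes this common payment, and $p(\mathbf b)=0$ if no user is confirmed under $\mathbf b$. *)

theory Defs
  imports Complex_Main "HOL-Combinatorics.Permutations"
begin

text \<open>Bid vectors are lists of reals;
users are identified with positions in the bid vector.
  blk : block size B
  incl: honest inclusion rule (run by the miner), returns the set of included positions
  conf, pay, rev: confirmation, payment and miner-revenue rules run by the blockchain
        on the list of included bids (in the order of their positions).\<close>

record tfm =
  blk  :: nat
  incl :: "real list \<Rightarrow> nat set"
  conf :: "real list \<Rightarrow> nat \<Rightarrow> bool"
  pay  :: "real list \<Rightarrow> nat \<Rightarrow> real"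
  rev  :: "real list \<Rightarrow> real"

definition valid_bids :: "real list \<Rightarrow> bool" where
  "valid_bids b \<longleftrightarrow> (\<forall>x\<in>set b. 0 \<le> x)"

definition tfm_wf :: "tfm \<Rightarrow> bool" where
  "tfm_wf M \<longleftrightarrow>
     (\<forall>b. valid_bids b \<longrightarrow> incl M b \<subseteq> {..<length b} \<and> card (incl M b) \<le> blk M) \<and>
     (\<forall>L j. valid_bids L \<and> length L \<le> blk M \<and> j < length L \<longrightarrow>
          pay M L j \<le> L ! j \<and> (\<not> conf M L j \<longrightarrow> pay M L j = 0)) \<and>
     (\<forall>b \<sigma>. valid_bids b \<and> \<sigma> permutes {..<length b} \<longrightarrow>
          incl M (permute_list \<sigma> b) = {i. i < length b \<and> \<sigma> i \<in> incl M b}) \<and>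
     (\<forall>L \<sigma>. valid_bids L \<and> length L \<le> blk M \<and> \<sigma> permutes {..<length L} \<longrightarrow>
          rev M (permute_list \<sigma> L) = rev M L \<and>
          (\<forall>j < length L. conf M (permute_list \<sigma> L) j = conf M L (\<sigma> j) \<and>
                          pay M (permute_list \<sigma> L) j = pay M L (\<sigma> j)))"

text \<open>Outcome when the bids with positions in S are included (S chosen by the miner).\<close>

definition incl_list :: "real list \<Rightarrow> nat set \<Rightarrow> real list" where
  "incl_list b S = map (\<lambda>i. b ! i) (sorted_list_of_set S)"

definition pos_in :: "nat set \<Rightarrow> nat \<Rightarrow> nat" where
  "pos_in S i = card {j\<in>S. j < i}"

definition conf_at :: "tfm \<Rightarrow> real list \<Rightarrow> nat set \<Rightarrow> nat \<Rightarrow> bool" where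
  "conf_at M b S i \<longleftrightarrow> i \<in> S \<and> conf M (incl_list b S) (pos_in S i)"

definition pay_at :: "tfm \<Rightarrow> real list \<Rightarrow> nat set \<Rightarrow> nat \<Rightarrow> real" where
  "pay_at M b S i = (if conf_at M b S i then pay M (incl_list b S) (pos_in S i) else 0)"

definition rev_at :: "tfm \<Rightarrow> real list \<Rightarrow> nat set \<Rightarrow> real" where
  "rev_at M b S = rev M (incl_list b S)"

text \<open>The composed mechanism (x, p, mu) with the honest inclusion rule.\<close>

definition xconf :: "tfm \<Rightarrow> real list \<Rightarrow> nat \<Rightarrow> bool" where
  "xconf M b i = conf_at M b (incl M b) i"

definition ppay :: "tfm \<Rightarrow> real list \<Rightarrow> nat \<Rightarrow> real" where
  "ppay M b i = pay_at M b (incl M b) i"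

definition mu :: "tfm \<Rightarrow> real list \<Rightarrow> real" where
  "mu M b = rev_at M b (incl M b)"

text \<open>Universal payment p(b): the payment of a confirmed user (all confirmed users pay
the same under weak UIC and 2-weak-SCP), and 0 if nobody is confirmed.\<close>

definition upay :: "tfm \<Rightarrow> real list \<Rightarrow> real" where
  "upay M b = (if \<exists>i < length b. xconf M b i
               then ppay M b (SOME i. i < length b \<and> xconf M b i) else 0)"

text \<open>Weak (1-strict) utility of a strategic player controlling the transactions at
positions T of the submitted vector b (true values v), with included set S.\<close>

definition tx_util :: "real \<Rightarrow> real \<Rightarrow> bool \<Rightarrow> real \<Rightarrow> real" where
  "tx_util v bid c p = (if c then v - p else - max 0 (bid - v))"

definition weak_util ::
  "tfm \<Rightarrow> bool \<Rightarrow> (nat \<Rightarrow> real) \<Rightarrow> nat set \<Rightarrow> real list \<Rightarrow> nat set \<Rightarrow> real" where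
  "weak_util M miner v T b S =
     (if miner then rev_at M b S else 0) +
     (\<Sum>i\<in>T. tx_util (v i) (b ! i) (conf_at M b S i) (pay_at M b S i))"

definition deviate :: "real list \<Rightarrow> nat set \<Rightarrow> (nat \<Rightarrow> real) \<Rightarrow> real list \<Rightarrow> real list" where
  "deviate b C d f = map (\<lambda>i. if i \<in> C then d i else b ! i) [0..<length b] @ f"

text \<open>True values: real users' true values are their truthful bids in b; fake bids have value 0.\<close>

definition true_vals :: "real list \<Rightarrow> nat \<Rightarrow> real" where
  "true_vals b i = (if i < length b then b ! i else 0)"

definition weak_UIC :: "tfm \<Rightarrow> bool" where
  "weak_UIC M \<longleftrightarrow>
    (\<forall>b i d f. valid_bids b \<and> i < length b \<and> (\<forall>j. 0 \<le> d j) \<and> valid_bids f \<longrightarrow>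
       (let b' = deviate b {i} d f in
        weak_util M False (true_vals b) ({i} \<union> {length b..<length b'}) b' (incl M b')
          \<le> weak_util M False (true_vals b) {i} b (incl M b)))"

definition weak_SCP :: "tfm \<Rightarrow> nat \<Rightarrow> bool" where
  "weak_SCP M c \<longleftrightarrow>
    (\<forall>b C d f S. valid_bids b \<and> C \<subseteq> {..<length b} \<and> 1 \<le> card C \<and> card C \<le> c \<and>
       (\<forall>j. 0 \<le> d j) \<and> valid_bids f \<and>
       S \<subseteq> {..<length (deviate b C d f)} \<and> card S \<le> blk M \<longrightarrow>
       (let b' = deviate b C d f in
        weak_util M True (true_vals b) (C \<union> {length b..<length b'}) b' S
          \<le> weak_util M True (true_vals b) C b (incl M b)))"

end

theory Submission
  imports Defs
begin

lemma pos_in_nth: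
  assumes "finite S" "t \<in> S"
  shows "pos_in S t < card S \<and> sorted_list_of_set S ! pos_in S t = t"
proof -
  define xs where "xs = sorted_list_of_set S"
  have st: "sorted_wrt (<) xs" and sx: "set xs = S" and dx: "distinct xs"
    using assms by (auto simp: xs_def)
  have lt: "\<And>p q. p < q \<Longrightarrow> q < length xs \<Longrightarrow> xs ! p < xs ! q"
    using st by (simp add: sorted_wrt_iff_nth_less)
  obtain a where a: "a < length xs" "xs ! a = t" using assms sx by (metis in_set_conv_nth)
  have "set (take a xs) = {j\<in>S. j < t}"
  proof
    show "set (take a xs) \<subseteq> {j\<in>S. j < t}"
    proof
      fix x assume "x \<in> set (take a xs)"
      then obtain q where q: "q < a" "x = xs ! q" using a(1) by (auto simp: in_set_conv_nth)
      then have "q < length xs" using a(1) by simp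
      then show "x \<in> {j\<in>S. j < t}" using q lt[of q a] a sx by auto
    qed
    show "{j\<in>S. j < t} \<subseteq> set (take a xs)"
    proof
      fix x assume x: "x \<in> {j\<in>S. j < t}"
      then have "x \<in> set xs" using sx by simp
      then obtain q where q: "q < length xs" "xs ! q = x" by (auto simp: in_set_conv_nth)
      have "q < a"
      proof (rule ccontr)
        assume "\<not> q < a"
        then have "a < q \<or> a = q" by auto
        then have "xs ! a \<le> xs ! q" using lt[of a q] q by auto
        then show False using x q a by auto
      qed
      then show "x \<in> set (take a xs)" using q by (auto simp: in_set_conv_nth)
    qed
  qed
  then have "card {j\<in>S. j < t} = length (take a xs)"
    using dx by (metis distinct_card distinct_take)
  then have "pos_in S t = a" unfolding pos_in_def using a(1) by simp
  moreover have "length xs = card S" using assms by (simp add: xs_def)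
  ultimately show ?thesis using a xs_def by auto
qed

lemma length_incl_list[simp]: "length (incl_list c S) = card S"
  by (simp add: incl_list_def)

lemma incl_list_nth:
  assumes "finite S" "t \<in> S"
  shows "pos_in S t < length (incl_list c S) \<and> incl_list c S ! pos_in S t = c ! t"
  using pos_in_nth[OF assms] by (simp add: incl_list_def)

lemma mset_incl_list: "finite S \<Longrightarrow> mset (incl_list c S) = image_mset (nth c) (mset_set S)"
  by (simp add: incl_list_def) (metis mset_sorted_list_of_multiset sorted_list_of_mset_set)

lemma valid_incl_list:
  assumes "valid_bids c" "S \<subseteq> {..<length c}"
  shows "valid_bids (incl_list c S)"
proof -
  have "finite S" using assms(2) finite_subset by blast
  then show ?thesis using assms by (auto simp: valid_bids_def incl_list_def)
qed

lemma wf_perm: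
  assumes wf: "tfm_wf M" and "valid_bids L" "length L \<le> blk M" "s permutes {..<length L}"
  shows "rev M (permute_list s L) = rev M L \<and>
          (\<forall>j < length L. conf M (permute_list s L) j = conf M L (s j) \<and>
                          pay M (permute_list s L) j = pay M L (s j))"
proof -
  have "\<forall>L \<sigma>. valid_bids L \<and> length L \<le> blk M \<and> \<sigma> permutes {..<length L} \<longrightarrow>
          rev M (permute_list \<sigma> L) = rev M L \<and>
          (\<forall>j < length L. conf M (permute_list \<sigma> L) j = conf M L (\<sigma> j) \<and>
                          pay M (permute_list \<sigma> L) j = pay M L (\<sigma> j))"
    using wf unfolding tfm_wf_def by (rule conjunct2[THEN conjunct2[THEN conjunct2]])
  then show ?thesis using assms(2-4) by blast
qed

lemma same_bid:
  assumes wf: "tfm_wf M" and v: "valid_bids L" and bl: "length L \<le> blk M"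
    and a: "a < length L" "a' < length L" and e: "L ! a = L ! a'"
  shows "conf M L a = conf M L a' \<and> pay M L a = pay M L a'"
proof -
  let ?s = "transpose a a'"
  have pm: "?s permutes {..<length L}" using a by (intro permutes_swap_id) auto
  have pl: "permute_list ?s L = L"
  proof (rule nth_equalityI)
    show "length (permute_list ?s L) = length L" by simp
    fix q assume "q < length (permute_list ?s L)"
    then have q: "q < length L" by simp
    have "permute_list ?s L ! q = L ! (?s q)" using permute_list_nth[OF pm q] .
    moreover have "L ! (?s q) = L ! q" using e by (simp add: transpose_def)
    ultimately show "permute_list ?s L ! q = L ! q" by simp
  qed
  have "conf M (permute_list ?s L) a = conf M L (?s a) \<and> pay M (permute_list ?s L) a = pay M L (?s a)"
    using wf_perm[OF wf v bl pm] a by blast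
  then show ?thesis using pl by simp
qed

lemma mset_outcome:
  assumes wf: "tfm_wf M" and v: "valid_bids L1" and bl: "length L1 \<le> blk M"
    and m: "mset L1 = mset L2"
  shows "rev M L2 = rev M L1"
    and "a < length L2 \<Longrightarrow> a' < length L1 \<Longrightarrow> L2 ! a = L1 ! a' \<Longrightarrow>
           conf M L2 a = conf M L1 a' \<and> pay M L2 a = pay M L1 a'"
proof -
  obtain s where s: "s permutes {..<length L1}" "permute_list s L1 = L2"
    using mset_eq_permutation[of L2 L1] m by metis
  have pr: "rev M (permute_list s L1) = rev M L1 \<and>
          (\<forall>j < length L1. conf M (permute_list s L1) j = conf M L1 (s j) \<and>
                          pay M (permute_list s L1) j = pay M L1 (s j))"
    using wf_perm[OF wf v bl s(1)] .
  then show "rev M L2 = rev M L1" using s by simp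
  assume a: "a < length L2" "a' < length L1" "L2 ! a = L1 ! a'"
  have len: "length L2 = length L1" using s by auto
  have sa: "s a < length L1" using permutes_in_image[OF s(1), of a] a(1) len by simp
  have "L1 ! s a = L2 ! a" using s(2) permute_list_nth[OF s(1), of a] a(1) len by simp
  then have "conf M L1 (s a) = conf M L1 a' \<and> pay M L1 (s a) = pay M L1 a'"
    using same_bid[OF wf v bl sa a(2)] a(3) by simp
  then show "conf M L2 a = conf M L1 a' \<and> pay M L2 a = pay M L1 a'"
    using pr s a len by auto
qed

lemma wf_incl:
  assumes "tfm_wf M" "valid_bids b"
  shows "incl M b \<subseteq> {..<length b}" "card (incl M b) \<le> blk M"
proof -
  have "\<forall>b. valid_bids b \<longrightarrow> incl M b \<subseteq> {..<length b} \<and> card (incl M b) \<le> blk M"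
    using assms(1) unfolding tfm_wf_def by (rule conjunct1)
  then show "incl M b \<subseteq> {..<length b}" "card (incl M b) \<le> blk M" using assms(2) by auto
qed

lemma outcome_eq:
  assumes wf: "tfm_wf M" and v1: "valid_bids c1"
    and S1: "S1 \<subseteq> {..<length c1}" and S2: "S2 \<subseteq> {..<length c2}" and bl: "card S1 \<le> blk M"
    and m: "image_mset (nth c1) (mset_set S1) = image_mset (nth c2) (mset_set S2)"
  shows "rev_at M c2 S2 = rev_at M c1 S1"
    and "t1 \<in> S1 \<Longrightarrow> t2 \<in> S2 \<Longrightarrow> c1 ! t1 = c2 ! t2 \<Longrightarrow>
         conf_at M c2 S2 t2 = conf_at M c1 S1 t1 \<and> pay_at M c2 S2 t2 = pay_at M c1 S1 t1"
proof -
  have f1: "finite S1" using S1 finite_subset by blast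
  have f2: "finite S2" using S2 finite_subset by blast
  have vL: "valid_bids (incl_list c1 S1)" using valid_incl_list[OF v1 S1] .
  have lL: "length (incl_list c1 S1) \<le> blk M" using bl by simp
  have mm: "mset (incl_list c1 S1) = mset (incl_list c2 S2)"
    using m f1 f2 by (simp add: mset_incl_list)
  show "rev_at M c2 S2 = rev_at M c1 S1"
    unfolding rev_at_def using mset_outcome(1)[OF wf vL lL mm] .
  assume t: "t1 \<in> S1" "t2 \<in> S2" "c1 ! t1 = c2 ! t2"
  have n1: "pos_in S1 t1 < length (incl_list c1 S1) \<and> incl_list c1 S1 ! pos_in S1 t1 = c1 ! t1"
    using incl_list_nth[OF f1 t(1)] .
  have n2: "pos_in S2 t2 < length (incl_list c2 S2) \<and> incl_list c2 S2 ! pos_in S2 t2 = c2 ! t2"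
    using incl_list_nth[OF f2 t(2)] .
  have "conf M (incl_list c2 S2) (pos_in S2 t2) = conf M (incl_list c1 S1) (pos_in S1 t1) \<and>
        pay M (incl_list c2 S2) (pos_in S2 t2) = pay M (incl_list c1 S1) (pos_in S1 t1)"
    using mset_outcome(2)[OF wf vL lL mm] n1 n2 t(3) by simp
  then show "conf_at M c2 S2 t2 = conf_at M c1 S1 t1 \<and> pay_at M c2 S2 t2 = pay_at M c1 S1 t1"
    using t unfolding conf_at_def pay_at_def by simp
qed

lemma dev_eq:
  assumes "length c' = length c" "\<forall>t<length c. t \<notin> C \<longrightarrow> c ! t = c' ! t"
  shows "deviate c C (\<lambda>t. if t < length c' then c' ! t else 0) f = c' @ f"
proof -
  have "map (\<lambda>i. if i \<in> C then (if i < length c' then c' ! i else 0) else c ! i) [0..<length c] = c'"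
    by (rule nth_equalityI) (use assms in auto)
  then show ?thesis by (simp add: deviate_def)
qed

lemma dev_nonneg: "valid_bids c' \<Longrightarrow> 0 \<le> (if t < length c' then c' ! t else 0)"
  by (auto simp: valid_bids_def)

lemma util_honest:
  "weak_util M mi v T c (incl M c) =
     (if mi then mu M c else 0) + (\<Sum>t\<in>T. tx_util (v t) (c ! t) (xconf M c t) (ppay M c t))"
  by (simp add: weak_util_def mu_def xconf_def ppay_def)

lemma scp:
  assumes wf: "tfm_wf M" and sc: "weak_SCP M 2" and v: "valid_bids c"
    and C: "C \<subseteq> {..<length c}" "1 \<le> card C" "card C \<le> 2"
    and v': "valid_bids c'" and l: "length c' = length c"
    and ag: "\<forall>t<length c. t \<notin> C \<longrightarrow> c ! t = c' ! t"
  shows "mu M c' + (\<Sum>t\<in>C. tx_util (true_vals c t) (c' ! t) (xconf M c' t) (ppay M c' t))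
         \<le> mu M c + (\<Sum>t\<in>C. tx_util (true_vals c t) (c ! t) (xconf M c t) (ppay M c t))"
proof -
  let ?d = "\<lambda>t. if t < length c' then c' ! t else 0"
  have de: "deviate c C ?d [] = c'" using dev_eq[OF l ag, of "[]"] by simp
  have inc: "incl M c' \<subseteq> {..<length c'}" "card (incl M c') \<le> blk M" using wf_incl[OF wf v'] by auto
  have "\<forall>b C d f S. valid_bids b \<and> C \<subseteq> {..<length b} \<and> 1 \<le> card C \<and> card C \<le> 2 \<and>
       (\<forall>j. 0 \<le> d j) \<and> valid_bids f \<and>
       S \<subseteq> {..<length (deviate b C d f)} \<and> card S \<le> blk M \<longrightarrow>
       (let b' = deviate b C d f in
        weak_util M True (true_vals b) (C \<union> {length b..<length b'}) b' S
          \<le> weak_util M True (true_vals b) C b (incl M b))"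
    using sc unfolding weak_SCP_def .
  note H = this
  have "weak_util M True (true_vals c) (C \<union> {length c..<length c'}) c' (incl M c')
          \<le> weak_util M True (true_vals c) C c (incl M c)"
    using spec[OF spec[OF spec[OF spec[OF spec[OF H, of c], of C], of ?d], of "[]"], of "incl M c'"]
      v C inc dev_nonneg[OF v'] de by (simp add: valid_bids_def Let_def)
  then show ?thesis using l by (simp add: util_honest)
qed

lemma scp_fake:
  assumes wf: "tfm_wf M" and sc: "weak_SCP M 2" and v: "valid_bids c"
    and C: "C \<subseteq> {..<length c}" "1 \<le> card C" "card C \<le> 2"
    and f: "valid_bids f" and S: "S \<subseteq> {..<length c + length f}" "card S \<le> blk M"
  shows "weak_util M True (true_vals c) (C \<union> {length c..<length c + length f}) (c @ f) S
          \<le> mu M c + (\<Sum>t\<in>C. tx_util (true_vals c t) (c ! t) (xconf M c t) (ppay M c t))"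
proof -
  let ?d = "\<lambda>t. if t < length c then c ! t else 0"
  have de: "deviate c C ?d f = c @ f" using dev_eq[of c c C f] by simp
  have "\<forall>b C d f S. valid_bids b \<and> C \<subseteq> {..<length b} \<and> 1 \<le> card C \<and> card C \<le> 2 \<and>
       (\<forall>j. 0 \<le> d j) \<and> valid_bids f \<and>
       S \<subseteq> {..<length (deviate b C d f)} \<and> card S \<le> blk M \<longrightarrow>
       (let b' = deviate b C d f in
        weak_util M True (true_vals b) (C \<union> {length b..<length b'}) b' S
          \<le> weak_util M True (true_vals b) C b (incl M b))"
    using sc unfolding weak_SCP_def .
  note H = this
  have "weak_util M True (true_vals c) (C \<union> {length c..<length (c @ f)}) (c @ f) S
          \<le> weak_util M True (true_vals c) C c (incl M c)"
    using spec[OF spec[OF spec[OF spec[OF spec[OF H, of c], of C], of ?d], of f], of S]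
      v C S f dev_nonneg[OF v] de by (simp add: valid_bids_def Let_def)
  then show ?thesis by (simp add: util_honest)
qed

lemma uic:
  assumes uc: "weak_UIC M" and v: "valid_bids c" and l: "l < length c" and y: "0 \<le> y"
  shows "tx_util (c ! l) y (xconf M (c[l := y]) l) (ppay M (c[l := y]) l)
         \<le> tx_util (c ! l) (c ! l) (xconf M c l) (ppay M c l)"
proof -
  let ?d = "\<lambda>t::nat. y"
  have de: "deviate c {l} ?d [] = c[l := y]"
    by (simp add: deviate_def) (rule nth_equalityI, auto simp: nth_list_update)
  have "\<forall>b i d f. valid_bids b \<and> i < length b \<and> (\<forall>j. 0 \<le> d j) \<and> valid_bids f \<longrightarrow>
       (let b' = deviate b {i} d f in
        weak_util M False (true_vals b) ({i} \<union> {length b..<length b'}) b' (incl M b')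
          \<le> weak_util M False (true_vals b) {i} b (incl M b))"
    using uc unfolding weak_UIC_def .
  note H = this
  have "weak_util M False (true_vals c) ({l} \<union> {length c..<length (c[l:=y])}) (c[l:=y]) (incl M (c[l:=y]))
          \<le> weak_util M False (true_vals c) {l} c (incl M c)"
    using spec[OF spec[OF spec[OF spec[OF H, of c], of l], of ?d], of "[]"]
      v l y de by (simp add: valid_bids_def Let_def)
  then show ?thesis using l by (simp add: util_honest true_vals_def)
qed

lemma pay_le:
  assumes wf: "tfm_wf M" and v: "valid_bids c" and l: "l < length c"
  shows "ppay M c l \<le> c ! l"
proof (cases "xconf M c l")
  case False
  then show ?thesis using v l by (simp add: ppay_def pay_at_def xconf_def valid_bids_def)
next
  case True
  let ?S = "incl M c"
  have inc: "?S \<subseteq> {..<length c}" "card ?S \<le> blk M" using wf_incl[OF wf v] by auto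
  have fin: "finite ?S" using inc(1) finite_subset by blast
  have lS: "l \<in> ?S" using True by (simp add: xconf_def conf_at_def)
  have n: "pos_in ?S l < length (incl_list c ?S) \<and> incl_list c ?S ! pos_in ?S l = c ! l"
    using incl_list_nth[OF fin lS] .
  have vL: "valid_bids (incl_list c ?S)" using valid_incl_list[OF v inc(1)] .
  have "\<forall>L j. valid_bids L \<and> length L \<le> blk M \<and> j < length L \<longrightarrow>
          pay M L j \<le> L ! j \<and> (\<not> conf M L j \<longrightarrow> pay M L j = 0)"
    using wf unfolding tfm_wf_def by (rule conjunct2[THEN conjunct1])
  note H = this
  have "pay M (incl_list c ?S) (pos_in ?S l) \<le> c ! l"
    using spec[OF spec[OF H, of "incl_list c ?S"], of "pos_in ?S l"] vL inc n by auto
  then show ?thesis using True by (simp add: ppay_def pay_at_def xconf_def)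
qed

lemma unconf_pay: "\<not> xconf M c l \<Longrightarrow> ppay M c l = 0"
  by (simp add: ppay_def pay_at_def xconf_def)

lemma valid_upd: "valid_bids c \<Longrightarrow> 0 \<le> y \<Longrightarrow> valid_bids (c[l := y])"
  unfolding valid_bids_def using set_update_subset_insert by fastforce

lemma valid_nth: "valid_bids c \<Longrightarrow> l < length c \<Longrightarrow> 0 \<le> c ! l"
  unfolding valid_bids_def by simp

lemma uic_inv:
  assumes uc: "weak_UIC M" and v: "valid_bids c" and l: "l < length c" and y: "0 \<le> y"
    and x1: "xconf M c l" and x2: "xconf M (c[l := y]) l"
  shows "ppay M (c[l := y]) l = ppay M c l"
proof -
  have a: "tx_util (c ! l) y (xconf M (c[l := y]) l) (ppay M (c[l := y]) l)
         \<le> tx_util (c ! l) (c ! l) (xconf M c l) (ppay M c l)" using uic[OF uc v l y] .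
  have v2: "valid_bids (c[l := y])" using valid_upd[OF v y] .
  have b: "tx_util (c[l := y] ! l) (c ! l) (xconf M ((c[l := y])[l := c ! l]) l) (ppay M ((c[l := y])[l := c ! l]) l)
         \<le> tx_util (c[l := y] ! l) (c[l := y] ! l) (xconf M (c[l := y]) l) (ppay M (c[l := y]) l)"
  proof -
    have ll: "l < length (c[l := y])" using l by simp
    show ?thesis using uic[OF uc v2 ll valid_nth[OF v l]] l by simp
  qed
  have e: "(c[l := y])[l := c ! l] = c" by simp
  show ?thesis using a b x1 x2 l unfolding e by (simp add: tx_util_def)
qed

lemma uic_mono:
  assumes wf: "tfm_wf M" and uc: "weak_UIC M" and v: "valid_bids c" and l: "l < length c"
    and x1: "xconf M c l" and y: "c ! l \<le> y"
  shows "xconf M (c[l := y]) l"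
proof (rule ccontr)
  assume n: "\<not> xconf M (c[l := y]) l"
  have y0: "0 \<le> y" using valid_nth[OF v l] y by simp
  have v2: "valid_bids (c[l := y])" using valid_upd[OF v y0] .
  have b: "tx_util (c[l := y] ! l) (c ! l) (xconf M ((c[l := y])[l := c ! l]) l) (ppay M ((c[l := y])[l := c ! l]) l)
         \<le> tx_util (c[l := y] ! l) (c[l := y] ! l) (xconf M (c[l := y]) l) (ppay M (c[l := y]) l)"
  proof -
    have ll: "l < length (c[l := y])" using l by simp
    show ?thesis using uic[OF uc v2 ll valid_nth[OF v l]] l by simp
  qed
  have e: "(c[l := y])[l := c ! l] = c" by simp
  have "y - ppay M c l \<le> 0" using b x1 n l unfolding e by (simp add: tx_util_def)
  moreover have "ppay M c l \<le> c ! l" using pay_le[OF wf v l] .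
  ultimately have "y = c ! l" using y by simp
  then have "c[l := y] = c" by simp
  then show False using n x1 by simp
qed

lemma wf_incl_perm:
  assumes wf: "tfm_wf M" and "valid_bids b" "s permutes {..<length b}"
  shows "incl M (permute_list s b) = {i. i < length b \<and> s i \<in> incl M b}"
proof -
  have "\<forall>b \<sigma>. valid_bids b \<and> \<sigma> permutes {..<length b} \<longrightarrow>
          incl M (permute_list \<sigma> b) = {i. i < length b \<and> \<sigma> i \<in> incl M b}"
    using wf unfolding tfm_wf_def by (rule conjunct2[THEN conjunct2[THEN conjunct1]])
  then show ?thesis using assms(2,3) by (meson spec mp conjI)
qed

lemma sym_user:
  assumes wf: "tfm_wf M" and v: "valid_bids c" and l: "l < length c" "l' < length c"
    and e: "c ! l = c ! l'" and x: "xconf M c l"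
  shows "xconf M c l' \<and> ppay M c l' = ppay M c l"
proof -
  let ?s = "transpose l l'"
  have pm: "?s permutes {..<length c}" using l by (intro permutes_swap_id) auto
  have pl: "permute_list ?s c = c"
  proof (rule nth_equalityI)
    show "length (permute_list ?s c) = length c" by simp
    fix q assume "q < length (permute_list ?s c)"
    then have q: "q < length c" by simp
    have "permute_list ?s c ! q = c ! (?s q)" using permute_list_nth[OF pm q] .
    moreover have "c ! (?s q) = c ! q" using e by (simp add: transpose_def)
    ultimately show "permute_list ?s c ! q = c ! q" by simp
  qed
  have "incl M c = {i. i < length c \<and> ?s i \<in> incl M c}" using wf_incl_perm[OF wf v pm] pl by simp
  moreover have lS: "l \<in> incl M c" using x by (simp add: xconf_def conf_at_def)
  ultimately have l'S: "l' \<in> incl M c" using l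
    by (metis (no_types, lifting) mem_Collect_eq transpose_apply_second)
  have inc: "incl M c \<subseteq> {..<length c}" "card (incl M c) \<le> blk M" using wf_incl[OF wf v] by auto
  have "conf_at M c (incl M c) l' = conf_at M c (incl M c) l \<and> pay_at M c (incl M c) l' = pay_at M c (incl M c) l"
    using outcome_eq(2)[OF wf v inc(1) inc(1) inc(2) refl lS l'S e] .
  then show ?thesis using x by (simp add: xconf_def ppay_def)
qed

lemma sum2: "l \<noteq> l' \<Longrightarrow> (\<Sum>t\<in>{l,l'}. f t) = f l + (f l' :: real)"
  by simp

lemma tv: "t < length c \<Longrightarrow> true_vals c t = c ! t"
  by (simp add: true_vals_def)

lemma tuT: "tx_util v b True p = v - p" by (simp add: tx_util_def)

lemma univ_le:
  assumes wf: "tfm_wf M" and uc: "weak_UIC M" and sc: "weak_SCP M 2" and v: "valid_bids c"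
    and l: "l < length c" "l' < length c" "l \<noteq> l'"
    and x: "xconf M c l" "xconf M c l'"
  shows "ppay M c l' \<le> ppay M c l"
proof (cases "c ! l \<le> c ! l'")
  case True
  define y where "y = c ! l'"
  define c2 where "c2 = c[l := y]"
  have y0: "0 \<le> y" using valid_nth[OF v l(2)] y_def by simp
  have v2: "valid_bids c2" using valid_upd[OF v y0] c2_def by simp
  have len2: "length c2 = length c" by (simp add: c2_def)
  have c2l: "c2 ! l = y" and c2l': "c2 ! l' = y" using l by (simp_all add: c2_def y_def)
  have ag: "\<forall>t<length c. t \<notin> {l} \<longrightarrow> c ! t = c2 ! t" by (simp add: c2_def)
  have ag2: "\<forall>t<length c2. t \<notin> {l} \<longrightarrow> c2 ! t = c ! t" by (simp add: c2_def)
  have ag3: "\<forall>t<length c. t \<notin> {l,l'} \<longrightarrow> c ! t = c2 ! t" by (simp add: c2_def)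
  have x2: "xconf M c2 l" using uic_mono[OF wf uc v l(1) x(1)] True unfolding y_def c2_def by simp
  have p2: "ppay M c2 l = ppay M c l" using uic_inv[OF uc v l(1) y0 x(1)] x2 unfolding c2_def by simp
  have s2: "xconf M c2 l' \<and> ppay M c2 l' = ppay M c2 l"
    using sym_user[OF wf v2 _ _ _ x2, of l'] l len2 c2l c2l' by simp
  have A: "mu M c + (\<Sum>t\<in>{l}. tx_util (true_vals c2 t) (c ! t) (xconf M c t) (ppay M c t))
         \<le> mu M c2 + (\<Sum>t\<in>{l}. tx_util (true_vals c2 t) (c2 ! t) (xconf M c2 t) (ppay M c2 t))"
    by (rule scp[OF wf sc v2 _ _ _ v]) (use l len2 ag2 in auto)
  have B: "mu M c2 + (\<Sum>t\<in>{l,l'}. tx_util (true_vals c t) (c2 ! t) (xconf M c2 t) (ppay M c2 t))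
         \<le> mu M c + (\<Sum>t\<in>{l,l'}. tx_util (true_vals c t) (c ! t) (xconf M c t) (ppay M c t))"
    by (rule scp[OF wf sc v _ _ _ v2]) (use l len2 ag3 in auto)
  have tc2: "true_vals c2 l = y" using tv[of l c2] l len2 c2l by simp
  have A': "mu M c \<le> mu M c2" using A x(1) x2 p2 tc2 c2l by (simp add: tuT)
  have B': "mu M c2 + (c ! l - ppay M c l) + (c ! l' - ppay M c l)
         \<le> mu M c + (c ! l - ppay M c l) + (c ! l' - ppay M c l')"
    using B x x2 p2 s2 tv[of l c] tv[of l' c] l by (simp add: sum2 tuT)
  show ?thesis using A' B' by linarith
next
  case False
  define y where "y = c ! l"
  define c2 where "c2 = c[l' := y]"
  have y0: "0 \<le> y" using valid_nth[OF v l(1)] y_def by simp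
  have v2: "valid_bids c2" using valid_upd[OF v y0] c2_def by simp
  have len2: "length c2 = length c" by (simp add: c2_def)
  have c2l: "c2 ! l = y" and c2l': "c2 ! l' = y" using l by (simp_all add: c2_def y_def)
  have ag: "\<forall>t<length c. t \<notin> {l'} \<longrightarrow> c ! t = c2 ! t" by (simp add: c2_def)
  have ag3: "\<forall>t<length c2. t \<notin> {l,l'} \<longrightarrow> c2 ! t = c ! t" by (simp add: c2_def)
  have x2: "xconf M c2 l'" using uic_mono[OF wf uc v l(2) x(2)] False unfolding y_def c2_def by simp
  have p2: "ppay M c2 l' = ppay M c l'" using uic_inv[OF uc v l(2) y0 x(2)] x2 unfolding c2_def by simp
  have s2: "xconf M c2 l \<and> ppay M c2 l = ppay M c2 l'"
    using sym_user[OF wf v2 _ _ _ x2, of l] l len2 c2l c2l' by simp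
  have A: "mu M c2 + (\<Sum>t\<in>{l'}. tx_util (true_vals c t) (c2 ! t) (xconf M c2 t) (ppay M c2 t))
         \<le> mu M c + (\<Sum>t\<in>{l'}. tx_util (true_vals c t) (c ! t) (xconf M c t) (ppay M c t))"
    by (rule scp[OF wf sc v _ _ _ v2]) (use l len2 ag in auto)
  have B: "mu M c + (\<Sum>t\<in>{l,l'}. tx_util (true_vals c2 t) (c ! t) (xconf M c t) (ppay M c t))
         \<le> mu M c2 + (\<Sum>t\<in>{l,l'}. tx_util (true_vals c2 t) (c2 ! t) (xconf M c2 t) (ppay M c2 t))"
    by (rule scp[OF wf sc v2 _ _ _ v]) (use l len2 ag3 in auto)
  have A': "mu M c2 \<le> mu M c" using A x(2) x2 p2 tv[of l' c] l c2l' by (simp add: tuT y_def)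
  have t1: "true_vals c2 l = y" "true_vals c2 l' = y" using tv[of l c2] tv[of l' c2] l len2 c2l c2l' by auto
  have B': "mu M c + (y - ppay M c l) + (y - ppay M c l')
         \<le> mu M c2 + (y - ppay M c l') + (y - ppay M c l')"
    using B x x2 p2 s2 t1 l c2l c2l' by (simp add: sum2 tuT y_def)
  show ?thesis using A' B' by linarith
qed

lemma univ:
  assumes wf: "tfm_wf M" and uc: "weak_UIC M" and sc: "weak_SCP M 2" and v: "valid_bids c"
    and l: "l < length c" "l' < length c"
    and x: "xconf M c l" "xconf M c l'"
  shows "ppay M c l' = ppay M c l"
proof (cases "l = l'")
  case False
  have "ppay M c l' \<le> ppay M c l" using univ_le[OF wf uc sc v l False x] .
  moreover have "ppay M c l \<le> ppay M c l'" using univ_le[OF wf uc sc v l(2) l(1) _ x(2) x(1)] False by simp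
  ultimately show ?thesis by linarith
qed simp

lemma upay_eq:
  assumes wf: "tfm_wf M" and uc: "weak_UIC M" and sc: "weak_SCP M 2" and v: "valid_bids c"
    and l: "l < length c" and x: "xconf M c l"
  shows "upay M c = ppay M c l"
proof -
  have ex: "\<exists>i < length c. xconf M c i" using l x by blast
  define s where "s = (SOME i. i < length c \<and> xconf M c i)"
  have "s < length c \<and> xconf M c s" unfolding s_def by (rule someI_ex) (use ex in blast)
  then have "ppay M c l = ppay M c s" using univ[OF wf uc sc v _ l] x by blast
  moreover have "upay M c = ppay M c s" unfolding upay_def s_def using ex by (rule if_P)
  ultimately show ?thesis by simp
qed

lemma tu00: "tx_util 0 0 (conf_at M c S t) (pay_at M c S t) = - pay_at M c S t"
  by (simp add: tx_util_def pay_at_def)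

lemma step_B:
  assumes wf: "tfm_wf M" and sc: "weak_SCP M 2" and v: "valid_bids b" and k: "k < length b"
  shows "mu M b + tx_util 0 (b ! k) (xconf M b k) (ppay M b k)
         \<le> mu M (b[k := 0]) - ppay M (b[k := 0]) k"
proof -
  have v': "valid_bids (b[k := 0])" using valid_upd[OF v] by simp
  have "mu M b + (\<Sum>t\<in>{k}. tx_util (true_vals (b[k := 0]) t) (b ! t) (xconf M b t) (ppay M b t))
         \<le> mu M (b[k := 0]) + (\<Sum>t\<in>{k}. tx_util (true_vals (b[k := 0]) t) (b[k := 0] ! t) (xconf M (b[k := 0]) t) (ppay M (b[k := 0]) t))"
    by (rule scp[OF wf sc v' _ _ _ v]) (use k in auto)
  moreover have "true_vals (b[k := 0]) k = 0" using k by (simp add: true_vals_def)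
  ultimately have "mu M b + tx_util 0 (b ! k) (xconf M b k) (ppay M b k)
         \<le> mu M (b[k := 0]) + tx_util 0 0 (xconf M (b[k := 0]) k) (ppay M (b[k := 0]) k)"
    using k by simp
  then show ?thesis using tu00[of M "b[k := 0]" "incl M (b[k := 0])" k] by (simp add: xconf_def ppay_def)
qed

lemma step_conf:
  assumes wf: "tfm_wf M" and sc: "weak_SCP M 2" and v: "valid_bids b"
    and k: "k < length b" and i: "i < length b" "i \<noteq> k"
    and x: "xconf M (b[k := 0]) i" and g: "b ! i - ppay M (b[k := 0]) i > b ! k"
  shows "xconf M b i \<and> ppay M b i \<le> ppay M (b[k := 0]) i + b ! k"
proof -
  let ?b' = "b[k := 0]"
  have v': "valid_bids ?b'" using valid_upd[OF v] by simp
  have bk: "0 \<le> b ! k" using valid_nth[OF v k] .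
  have A: "mu M ?b' + (\<Sum>t\<in>{i,k}. tx_util (true_vals b t) (?b' ! t) (xconf M ?b' t) (ppay M ?b' t))
         \<le> mu M b + (\<Sum>t\<in>{i,k}. tx_util (true_vals b t) (b ! t) (xconf M b t) (ppay M b t))"
    by (rule scp[OF wf sc v _ _ _ v']) (use k i in auto)
  have A': "mu M ?b' + (b ! i - ppay M ?b' i) + tx_util (b ! k) 0 (xconf M ?b' k) (ppay M ?b' k)
         \<le> mu M b + tx_util (b ! i) (b ! i) (xconf M b i) (ppay M b i) + tx_util (b ! k) (b ! k) (xconf M b k) (ppay M b k)"
    using A x i k tv[of i b] tv[of k b] by (simp add: sum2 tuT)
  have B: "mu M b + tx_util 0 (b ! k) (xconf M b k) (ppay M b k) \<le> mu M ?b' - ppay M ?b' k"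
    using step_B[OF wf sc v k] .
  have u: "ppay M ?b' k = 0" if "\<not> xconf M ?b' k" using unconf_pay that .
  have "tx_util (b ! i) (b ! i) (xconf M b i) (ppay M b i) \<ge> b ! i - ppay M ?b' i - b ! k"
    using A' B bk u by (cases "xconf M b k"; cases "xconf M ?b' k") (auto simp: tx_util_def)
  then show ?thesis using g bk by (cases "xconf M b i") (auto simp: tx_util_def)
qed

lemma step_fake:
  assumes wf: "tfm_wf M" and sc: "weak_SCP M 2" and v: "valid_bids b"
    and k: "k < length b" and i: "i < length b" "j < length b" "i \<noteq> j" "i \<noteq> k" "j \<noteq> k"
    and x: "xconf M (b[k := 0]) i" "xconf M (b[k := 0]) j"
  shows "mu M (b[k := 0]) + (b ! i - ppay M (b[k := 0]) i) + (b ! j - ppay M (b[k := 0]) j) - ppay M (b[k := 0]) k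
     \<le> mu M b + (\<Sum>t\<in>{i,j}. tx_util (true_vals b t) (b ! t) (xconf M b t) (ppay M b t))"
proof -
  let ?b' = "b[k := 0]"
  define m where "m = length b"
  define S0 where "S0 = incl M ?b'"
  define S where "S = (if k \<in> S0 then insert m (S0 - {k}) else S0)"
  let ?c = "b @ [0]"
  have v': "valid_bids ?b'" using valid_upd[OF v] by simp
  have vc: "valid_bids ?c" using v by (simp add: valid_bids_def)
  have inc: "S0 \<subseteq> {..<length ?b'}" "card S0 \<le> blk M" using wf_incl[OF wf v'] S0_def by auto
  have fin0: "finite S0" using inc(1) finite_subset by blast
  have mS0: "m \<notin> S0" using inc(1) m_def by auto
  have Ssub: "S \<subseteq> {..<length ?c}" using inc(1) m_def by (auto simp: S_def)
  have cardS: "card S = card S0"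
  proof (cases "k \<in> S0")
    case True
    then have "card S = Suc (card (S0 - {k}))" using fin0 mS0 by (simp add: S_def)
    also have "\<dots> = card S0" using True fin0 by (metis card_Suc_Diff1)
    finally show ?thesis .
  qed (simp add: S_def)
  have nc: "\<And>t. t < m \<Longrightarrow> t \<noteq> k \<Longrightarrow> ?c ! t = ?b' ! t" using m_def by (simp add: nth_append)
  have ms: "image_mset (nth ?b') (mset_set S0) = image_mset (nth ?c) (mset_set S)"
  proof (cases "k \<in> S0")
    case True
    have e1: "mset_set S0 = add_mset k (mset_set (S0 - {k}))" using True fin0 by (simp add: mset_set.remove)
    have e2: "mset_set S = add_mset m (mset_set (S0 - {k}))" using True fin0 mS0 by (simp add: S_def)
    have e3: "image_mset (nth ?b') (mset_set (S0 - {k})) = image_mset (nth ?c) (mset_set (S0 - {k}))"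
    proof (rule image_mset_cong)
      fix t assume "t \<in># mset_set (S0 - {k})"
      then have "t \<in> S0" "t \<noteq> k" using fin0 by auto
      then show "?b' ! t = ?c ! t" using nc inc(1) m_def by auto
    qed
    show ?thesis using e1 e2 e3 k m_def by (simp add: nth_append)
  next
    case False
    show ?thesis unfolding S_def using False
    proof (simp, intro image_mset_cong)
      fix t assume "t \<in># mset_set S0"
      then have "t \<in> S0" using fin0 by auto
      then have "t \<noteq> k" "t < m" using False inc(1) m_def by auto
      then show "?b' ! t = ?c ! t" using nc by simp
    qed
  qed
  have oe_rev: "rev_at M ?c S = rev_at M ?b' S0"
    using outcome_eq(1)[OF wf v' inc(1) Ssub inc(2) ms] .
  have oe: "\<And>t1 t2. t1 \<in> S0 \<Longrightarrow> t2 \<in> S \<Longrightarrow> ?b' ! t1 = ?c ! t2 \<Longrightarrow>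
         conf_at M ?c S t2 = conf_at M ?b' S0 t1 \<and> pay_at M ?c S t2 = pay_at M ?b' S0 t1"
    using outcome_eq(2)[OF wf v' inc(1) Ssub inc(2) ms] by blast
  have iS0: "i \<in> S0" "j \<in> S0" using x by (simp_all add: xconf_def conf_at_def S0_def)
  have iS: "i \<in> S" "j \<in> S" using iS0 i by (auto simp: S_def)
  have ci: "?c ! i = b ! i" "?c ! j = b ! j" using i by (simp_all add: nth_append)
  have bi: "?b' ! i = b ! i" "?b' ! j = b ! j" using i by simp_all
  have ui: "tx_util (true_vals b i) (?c ! i) (conf_at M ?c S i) (pay_at M ?c S i) = b ! i - ppay M ?b' i"
    using oe[OF iS0(1) iS(1)] ci bi x tv[of i b] i by (simp add: xconf_def ppay_def tuT S0_def)
  have uj: "tx_util (true_vals b j) (?c ! j) (conf_at M ?c S j) (pay_at M ?c S j) = b ! j - ppay M ?b' j"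
    using oe[OF iS0(2) iS(2)] ci bi x tv[of j b] i by (simp add: xconf_def ppay_def tuT S0_def)
  have tm: "true_vals b m = 0" "?c ! m = 0" using m_def by (simp_all add: true_vals_def)
  have um: "tx_util (true_vals b m) (?c ! m) (conf_at M ?c S m) (pay_at M ?c S m) = - ppay M ?b' k"
  proof (cases "k \<in> S0")
    case True
    have "m \<in> S" using True by (simp add: S_def)
    then have "pay_at M ?c S m = pay_at M ?b' S0 k" using oe[OF True] tm k by simp
    then show ?thesis using tm tu00[of M ?c S m] by (simp add: ppay_def S0_def)
  next
    case False
    have "m \<notin> S" using False mS0 by (simp add: S_def)
    then have "\<not> conf_at M ?c S m" by (simp add: conf_at_def)
    moreover have "\<not> xconf M ?b' k" using False by (simp add: xconf_def conf_at_def S0_def)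
    ultimately show ?thesis using tm unconf_pay by (simp add: tx_util_def)
  qed
  have "weak_util M True (true_vals b) ({i,j} \<union> {length b..<length b + length [0::real]}) ?c S
          \<le> mu M b + (\<Sum>t\<in>{i,j}. tx_util (true_vals b t) (b ! t) (xconf M b t) (ppay M b t))"
    by (rule scp_fake[OF wf sc v]) (use i cardS inc(2) Ssub in \<open>auto simp: valid_bids_def\<close>)
  moreover have "{i,j} \<union> {length b..<length b + length [0::real]} = insert i (insert j {m})" using m_def by auto
  moreover have "m \<noteq> i" "m \<noteq> j" using i m_def by auto
  ultimately show ?thesis using ui uj um[unfolded m_def] oe_rev i
    by (simp add: weak_util_def mu_def S0_def)
qed

theorem mainTheorem18:
  fixes M :: tfm and b :: "real list" and i j k :: nat
  assumes "tfm_wf M" and "weak_UIC M" and "weak_SCP M 2"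
    and "valid_bids b"
    and "i < length b" and "j < length b" and "k < length b"
    and "i \<noteq> j" and "i \<noteq> k" and "j \<noteq> k"
    and "xconf M (b[k := 0]) i" and "xconf M (b[k := 0]) j"
    and "b ! i - upay M (b[k := 0]) > b ! k"
    and "b ! j - upay M (b[k := 0]) > b ! k"
  shows "xconf M b i \<and> xconf M b j \<and> upay M b \<le> upay M (b[k := 0]) + b ! k / 2"
proof -
  note wf = assms(1) and uc = assms(2) and sc = assms(3) and v = assms(4)
  let ?b' = "b[k := 0]"
  have v': "valid_bids ?b'" using valid_upd[OF v] by simp
  have pi': "upay M ?b' = ppay M ?b' i" using upay_eq[OF wf uc sc v' _ assms(11)] assms(5) by simp
  have pj': "upay M ?b' = ppay M ?b' j" using upay_eq[OF wf uc sc v' _ assms(12)] assms(6) by simp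
  have ci: "xconf M b i" using step_conf[OF wf sc v assms(7) assms(5) assms(9) assms(11)] assms(13) pi' by simp
  have cj: "xconf M b j" using step_conf[OF wf sc v assms(7) assms(6) assms(10) assms(12)] assms(14) pj' by simp
  have pi: "upay M b = ppay M b i" using upay_eq[OF wf uc sc v assms(5) ci] .
  have pj: "upay M b = ppay M b j" using upay_eq[OF wf uc sc v assms(6) cj] .
  have F: "mu M ?b' + (b ! i - upay M ?b') + (b ! j - upay M ?b') - ppay M ?b' k
     \<le> mu M b + (b ! i - upay M b) + (b ! j - upay M b)"
    using step_fake[OF wf sc v assms(7) assms(5) assms(6) assms(8) assms(9) assms(10) assms(11) assms(12)]
      pi' pj' pi pj ci cj tv[of i b] tv[of j b] assms(5,6,8) by (simp add: sum2 tuT)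
  have B: "mu M b + tx_util 0 (b ! k) (xconf M b k) (ppay M b k) \<le> mu M ?b' - ppay M ?b' k"
    using step_B[OF wf sc v assms(7)] .
  have bk: "0 \<le> b ! k" using valid_nth[OF v assms(7)] .
  have last: "upay M b \<le> upay M ?b' + b ! k / 2"
  proof (cases "xconf M b k")
    case True
    have "upay M b = ppay M b k" using upay_eq[OF wf uc sc v assms(7) True] .
    moreover have "ppay M b k \<le> b ! k" using pay_le[OF wf v assms(7)] .
    ultimately show ?thesis using F B True by (simp add: tuT)
  next
    case False
    then show ?thesis using F B bk by (simp add: tx_util_def)
  qed
  show ?thesis using ci cj last by simp
qed

end
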